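(* Let $N_n$ be a noisy discrete memoryless classical channel whose confusability graph $G(N_n)$, with $n$ vertices, is isomorphic to an exclusivity graph $\mathcal{G}$ satisfying $\mathscr{C}_\mathcal{G}=\mathscr{Q}_\mathcal{G}$. Then the vertex-encoding protocol with a perfect $d$-level quantum channel (for any $d$ for which it can be implemented) does not exhibit one-shot zero-error superadditivity; that is, $n\le \alpha(G(N_n))\, d$.
   Context: A discrete memoryless classical channel $N$ has finite input alphabet $\mathcal{X}$, finite output alphabet $\mathcal{Y}$ and conditional probabilities $P(y|x)$. Distinct inputs $x,x'$ are confusable if some output $y$ has $P(y|x)>0$ and $P(y|x')>0$; the confusability graph $G(N)$ has vertex set $\mathcal{X}$ and edges between distinct confusable inputs, and $\alpha(G(N))$ (its independence number) is the one-shot zero-error capacity of $N$. For each output $y$, the hyperedge $h_y=\{x: P(y|x)>0\}$. A perfect $d$-level quantum channel is the identity channel on states of $\mathbb{C}^d$, with one-shot zero-error capacity $d$. The vertex-encoding protocol with a perfect $d$-level quantum channel: one assigns to every input $v\in\mathcal{X}$ a unit vector $\ket{\psi_v}\in\mathbb{C}^d$ such that $\ket{\psi_v}\perp\ket{\psi_w}$ whenever $v,w$ are adjacent in $G(N)$ (an orthogonal representation of $G(N)$ in $\mathbb{C}^d$). Messages are identified with the $n=|\mathcal{X}|$ inputs; to send $v$, the sender inputs $v$ into $N$ and sends $\ket{\psi_v}$ through the perfect quantum channel; upon seeing output $y$, the receiver performs a projective measurement containing the projectors $\ket{\psi_w}\!\bra{\psi_w}$, $w\in h_y$ (completed to the identity),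 which identifies $v$ with certainty. The protocol thus transmits $n$ messages with zero error, and it is said to exhibit one-shot zero-error superadditivity if $n>\alpha(G(N))\cdot d$. Exclusivity graph framework: for a finite graph $\mathcal{G}$ with vertex set $V_\mathcal{G}$ and edge set $E_\mathcal{G}$, a behavior is a map $p:V_\mathcal{G}\to[0,1]$ with $p(v)+p(v')\le 1$ for all edges $\{v,v'\}$. It is classical if there is a probability space $(\Omega,\Sigma,\mu)$ and sets $A_v\in\Sigma$ with $A_v\cap A_{v'}=\varnothing$ for all edges $\{v,v'\}$ and $p(v)=\mu(A_v)$; $\mathscr{C}_\mathcal{G}$ is the set of classical behaviors. It is quantum if there are a Hilbert space $\mathcal{H}$, a density operator $\rho$ and projectors $\Pi_v$ with $\Pi_v\Pi_{v'}=0$ for all edges $\{v,v'\}$ and $p(v)=\mathrm{Tr}(\rho\Pi_v)$; $\mathscr{Q}_\mathcal{G}$ is the set of quantum behaviors. *)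

theory Defs
  imports "HOL-Probability.Probability"
begin

definition dm_channel :: "'x set \<Rightarrow> 'y set \<Rightarrow> ('x \<Rightarrow> 'y \<Rightarrow> real) \<Rightarrow> bool" where
  "dm_channel X Y P \<longleftrightarrow> finite X \<and> finite Y \<and>
     (\<forall>x\<in>X. \<forall>y\<in>Y. 0 \<le> P x y) \<and> (\<forall>x\<in>X. (\<Sum>y\<in>Y. P x y) = 1)"

definition confusable :: "'x set \<Rightarrow> 'y set \<Rightarrow> ('x \<Rightarrow> 'y \<Rightarrow> real) \<Rightarrow> 'x \<Rightarrow> 'x \<Rightarrow> bool" where
  "confusable X Y P x x' \<longleftrightarrow> x \<in> X \<and> x' \<in> X \<and> x \<noteq> x' \<and>
     (\<exists>y\<in>Y. P x y > 0 \<and> P x' y > 0)"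

definition simple_graph :: "'v set \<Rightarrow> ('v \<Rightarrow> 'v \<Rightarrow> bool) \<Rightarrow> bool" where
  "simple_graph V E \<longleftrightarrow> finite V \<and> (\<forall>u w. E u w \<longrightarrow> u \<in> V \<and> w \<in> V) \<and>
     (\<forall>u w. E u w \<longrightarrow> E w u) \<and> (\<forall>u. \<not> E u u)"

definition independent_set :: "'v set \<Rightarrow> ('v \<Rightarrow> 'v \<Rightarrow> bool) \<Rightarrow> 'v set \<Rightarrow> bool" where
  "independent_set V E S \<longleftrightarrow> S \<subseteq> V \<and> (\<forall>u\<in>S. \<forall>w\<in>S. \<not> E u w)"

definition independence_number :: "'v set \<Rightarrow> ('v \<Rightarrow> 'v \<Rightarrow> bool) \<Rightarrow> nat" where
  "independence_number V E = Max (card ` {S. independent_set V E S})"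

definition graph_iso :: "'a set \<Rightarrow> ('a \<Rightarrow> 'a \<Rightarrow> bool) \<Rightarrow> 'b set \<Rightarrow> ('b \<Rightarrow> 'b \<Rightarrow> bool) \<Rightarrow> bool" where
  "graph_iso V E W F \<longleftrightarrow> (\<exists>f. bij_betw f V W \<and>
     (\<forall>u\<in>V. \<forall>w\<in>V. E u w \<longleftrightarrow> F (f u) (f w)))"

text \<open>Vectors of C^d are represented as functions nat => complex, of which only the
  coordinates i < d matter; the inner product is the standard Hermitian one.\<close>
definition cinner :: "nat \<Rightarrow> (nat \<Rightarrow> complex) \<Rightarrow> (nat \<Rightarrow> complex) \<Rightarrow> complex" where
  "cinner d u w = (\<Sum>i<d. cnj (u i) * w i)"

definition orthogonal_representation ::
  "'v set \<Rightarrow> ('v \<Rightarrow> 'v \<Rightarrow> bool) \<Rightarrow> nat \<Rightarrow> ('v \<Rightarrow> nat \<Rightarrow> complex) \<Rightarrow> bool" where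
  "orthogonal_representation V E d \<psi> \<longleftrightarrow>
     (\<forall>v\<in>V. cinner d (\<psi> v) (\<psi> v) = 1) \<and>
     (\<forall>v\<in>V. \<forall>w\<in>V. E v w \<longrightarrow> cinner d (\<psi> v) (\<psi> w) = 0)"

definition behavior :: "'v set \<Rightarrow> ('v \<Rightarrow> 'v \<Rightarrow> bool) \<Rightarrow> ('v \<Rightarrow> real) \<Rightarrow> bool" where
  "behavior V E p \<longleftrightarrow> (\<forall>v\<in>V. 0 \<le> p v \<and> p v \<le> 1) \<and> (\<forall>v. v \<notin> V \<longrightarrow> p v = 0) \<and>
     (\<forall>v\<in>V. \<forall>w\<in>V. E v w \<longrightarrow> p v + p w \<le> 1)"

text \<open>Classical behaviors. The probability space is taken on the sample type nat
  (every classical behavior of a finite graph is realised on a finite probability space).\<close>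
definition classical_behaviors :: "'v set \<Rightarrow> ('v \<Rightarrow> 'v \<Rightarrow> bool) \<Rightarrow> ('v \<Rightarrow> real) set" where
  "classical_behaviors V E = {p. behavior V E p \<and>
     (\<exists>(M :: nat measure) A. prob_space M \<and> (\<forall>v\<in>V. A v \<in> sets M) \<and>
        (\<forall>v\<in>V. \<forall>w\<in>V. E v w \<longrightarrow> A v \<inter> A w = {}) \<and>
        (\<forall>v\<in>V. p v = measure M (A v)))}"

text \<open>Finite-dimensional linear algebra on C^m: matrices as functions nat => nat => complex,
  only entries with indices < m matter.\<close>
definition cmat_mult :: "nat \<Rightarrow> (nat \<Rightarrow> nat \<Rightarrow> complex) \<Rightarrow> (nat \<Rightarrow> nat \<Rightarrow> complex) \<Rightarrow> nat \<Rightarrow> nat \<Rightarrow> complex" where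
  "cmat_mult m A B i j = (\<Sum>k<m. A i k * B k j)"

definition ctrace :: "nat \<Rightarrow> (nat \<Rightarrow> nat \<Rightarrow> complex) \<Rightarrow> complex" where
  "ctrace m A = (\<Sum>i<m. A i i)"

definition hermitian :: "nat \<Rightarrow> (nat \<Rightarrow> nat \<Rightarrow> complex) \<Rightarrow> bool" where
  "hermitian m A \<longleftrightarrow> (\<forall>i<m. \<forall>j<m. A i j = cnj (A j i))"

definition projector :: "nat \<Rightarrow> (nat \<Rightarrow> nat \<Rightarrow> complex) \<Rightarrow> bool" where
  "projector m A \<longleftrightarrow> hermitian m A \<and> (\<forall>i<m. \<forall>j<m. cmat_mult m A A i j = A i j)"

definition density_operator :: "nat \<Rightarrow> (nat \<Rightarrow> nat \<Rightarrow> complex) \<Rightarrow> bool" where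
  "density_operator m \<rho> \<longleftrightarrow> hermitian m \<rho> \<and> ctrace m \<rho> = 1 \<and>
     (\<forall>x :: nat \<Rightarrow> complex. 0 \<le> Re (\<Sum>i<m. \<Sum>j<m. cnj (x i) * \<rho> i j * x j))"

text \<open>Quantum behaviors, realised on the Hilbert spaces C^m, m arbitrary.\<close>
definition quantum_behaviors :: "'v set \<Rightarrow> ('v \<Rightarrow> 'v \<Rightarrow> bool) \<Rightarrow> ('v \<Rightarrow> real) set" where
  "quantum_behaviors V E = {p. behavior V E p \<and>
     (\<exists>(m :: nat) \<rho> Proj. density_operator m \<rho> \<and> (\<forall>v\<in>V. projector m (Proj v)) \<and>
        (\<forall>v\<in>V. \<forall>w\<in>V. E v w \<longrightarrow> (\<forall>i<m. \<forall>j<m. cmat_mult m (Proj v) (Proj w) i j = 0)) \<and>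
        (\<forall>v\<in>V. complex_of_real (p v) = ctrace m (cmat_mult m \<rho> (Proj v))))}"

end

theory Submission
  imports Defs
begin

lemma cinner_cnj: "cinner d v u = cnj (cinner d u v)"
  by (simp add: cinner_def mult.commute)

theorem theorem2:
  fixes X :: "'x set" and Y :: "'y set" and P :: "'x \<Rightarrow> 'y \<Rightarrow> real"
    and V :: "'v set" and E :: "'v \<Rightarrow> 'v \<Rightarrow> bool"
    and d :: nat and \<psi> :: "'x \<Rightarrow> nat \<Rightarrow> complex"
  assumes "dm_channel X Y P"
    and "simple_graph V E"
    and "graph_iso X (confusable X Y P) V E"
    and "classical_behaviors V E = quantum_behaviors V E"
    and "orthogonal_representation X (confusable X Y P) d \<psi>"
  shows "card X \<le> independence_number X (confusable X Y P) * d"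
proof (cases "X = {}")
  case True then show ?thesis by simp
next
  case False
  let ?C = "confusable X Y P"
  have finX: "finite X" using assms(1) by (simp add: dm_channel_def)
  obtain f where bij: "bij_betw f X V" and fE: "\<And>u w. u \<in> X \<Longrightarrow> w \<in> X \<Longrightarrow> ?C u w \<longleftrightarrow> E (f u) (f w)"
    using assms(3) unfolding graph_iso_def by blast
  define g where "g = the_inv_into X f"
  have gV: "\<And>w. w \<in> V \<Longrightarrow> g w \<in> X" and fg: "\<And>w. w \<in> V \<Longrightarrow> f (g w) = w"
    using bij unfolding g_def
    by (auto simp: bij_betw_def the_inv_into_into f_the_inv_into_f)
  have fX: "\<And>x. x \<in> X \<Longrightarrow> f x \<in> V" using bij by (auto simp: bij_betw_def)
  have unit: "\<And>x. x \<in> X \<Longrightarrow> cinner d (\<psi> x) (\<psi> x) = 1"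
    and orth: "\<And>x y. x \<in> X \<Longrightarrow> y \<in> X \<Longrightarrow> ?C x y \<Longrightarrow> cinner d (\<psi> x) (\<psi> y) = 0"
    using assms(5) by (auto simp: orthogonal_representation_def)
  obtain x0 where "x0 \<in> X" using False by blast
  have dpos: "d > 0"
  proof (rule ccontr)
    assume "\<not> d > 0" then have "d = 0" by simp
    with unit[OF \<open>x0 \<in> X\<close>] show False by (simp add: cinner_def)
  qed
  have d2: "d \<ge> 2" if "w \<in> V" "w' \<in> V" "E w w'" for w w'
  proof (rule ccontr)
    assume "\<not> d \<ge> 2"
    with dpos have d1: "d = 1" by simp
    have "?C (g w) (g w')" using fE[OF gV gV] that fg by simp
    then have o: "cinner d (\<psi> (g w)) (\<psi> (g w')) = 0" using orth gV that by blast
    have u1: "cnj (\<psi> (g w) 0) * \<psi> (g w) 0 = 1" using unit[OF gV[OF that(1)]] d1 by (simp add: cinner_def)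
    have u2: "cnj (\<psi> (g w') 0) * \<psi> (g w') 0 = 1" using unit[OF gV[OF that(2)]] d1 by (simp add: cinner_def)
    have o': "cnj (\<psi> (g w) 0) * \<psi> (g w') 0 = 0" using o d1 by (simp add: cinner_def)
    show False using u1 u2 o' by auto
  qed
  define \<phi> where "\<phi> w = \<psi> (g w)" for w
  define Pr where "Pr w i j = \<phi> w i * cnj (\<phi> w j)" for w i j
  define \<rho> :: "nat \<Rightarrow> nat \<Rightarrow> complex" where "\<rho> i j = (if i = j then 1 / of_nat d else 0)" for i j
  define p where "p w = (if w \<in> V then 1 / real d else 0)" for w
  have unitV: "\<And>w. w \<in> V \<Longrightarrow> cinner d (\<phi> w) (\<phi> w) = 1" using unit gV by (simp add: \<phi>_def)
  have mult: "cmat_mult d (Pr v) (Pr w) i j = \<phi> v i * cnj (\<phi> w j) * cinner d (\<phi> v) (\<phi> w)" for v w i j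
    by (simp add: cmat_mult_def Pr_def cinner_def sum_distrib_left sum_distrib_right mult_ac)
  have "p \<in> quantum_behaviors V E"
    unfolding quantum_behaviors_def
  proof (intro CollectI conjI exI ballI allI impI)
    show "behavior V E p"
      unfolding behavior_def p_def using dpos d2
      by (auto simp: field_simps)
    show "density_operator d \<rho>"
      unfolding density_operator_def hermitian_def ctrace_def
    proof (intro conjI allI impI)
      show "\<rho> i j = cnj (\<rho> j i)" for i j by (simp add: \<rho>_def)
      show "(\<Sum>i<d. \<rho> i i) = 1" using dpos by (simp add: \<rho>_def)
      fix x :: "nat \<Rightarrow> complex"
      have "(\<Sum>i<d. \<Sum>j<d. cnj (x i) * \<rho> i j * x j) = (\<Sum>i<d. cnj (x i) * x i / of_nat d)"
      proof (intro sum.cong refl)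
        fix i assume "i \<in> {..<d}"
        have "(\<Sum>j<d. cnj (x i) * \<rho> i j * x j) = (\<Sum>j<d. if i = j then cnj (x i) * x j / of_nat d else 0)"
          by (intro sum.cong refl) (simp add: \<rho>_def)
        also have "\<dots> = cnj (x i) * x i / of_nat d" using \<open>i \<in> {..<d}\<close> by (simp add: sum.delta)
        finally show "(\<Sum>j<d. cnj (x i) * \<rho> i j * x j) = cnj (x i) * x i / of_nat d" .
      qed
      also have "0 \<le> Re \<dots>"
        unfolding Re_sum by (intro sum_nonneg) (simp add: Re_divide)
      finally show "0 \<le> Re (\<Sum>i<d. \<Sum>j<d. cnj (x i) * \<rho> i j * x j)" .
    qed
    show "projector d (Pr v)" if "v \<in> V" for v
      unfolding projector_def hermitian_def
      using unitV[OF that] by (simp add: mult Pr_def)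
    show "cmat_mult d (Pr v) (Pr w) i j = 0" if "v \<in> V" "w \<in> V" "E v w" for v w i j
    proof -
      have "?C (g v) (g w)" using fE[OF gV gV] that fg by simp
      then have "cinner d (\<phi> v) (\<phi> w) = 0" using orth gV that by (simp add: \<phi>_def)
      then show ?thesis by (simp add: mult)
    qed
    show "complex_of_real (p w) = ctrace d (cmat_mult d \<rho> (Pr w))" if "w \<in> V" for w
    proof -
      have "ctrace d (cmat_mult d \<rho> (Pr w)) = (\<Sum>i<d. Pr w i i / of_nat d)"
        unfolding ctrace_def cmat_mult_def
      proof (intro sum.cong refl)
        fix i assume i: "i \<in> {..<d}"
        have "(\<Sum>k<d. \<rho> i k * Pr w k i) = (\<Sum>k<d. if i = k then Pr w k i / of_nat d else 0)"
          by (intro sum.cong refl) (simp add: \<rho>_def)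
        also have "\<dots> = Pr w i i / of_nat d" using i by (simp add: sum.delta)
        finally show "(\<Sum>k<d. \<rho> i k * Pr w k i) = Pr w i i / of_nat d" .
      qed
      also have "\<dots> = cnj (cinner d (\<phi> w) (\<phi> w)) / of_nat d"
        by (simp add: Pr_def cinner_def sum_divide_distrib mult.commute)
      also have "\<dots> = 1 / of_nat d" using unitV[OF that] by simp
      finally show ?thesis using that by (simp add: p_def)
    qed
  qed
  then have "p \<in> classical_behaviors V E" using assms(4) by simp
  then obtain M :: "nat measure" and A where M: "prob_space M" and AM: "\<forall>v\<in>V. A v \<in> sets M"
    and Adisj: "\<forall>v\<in>V. \<forall>w\<in>V. E v w \<longrightarrow> A v \<inter> A w = {}"
    and pA: "\<forall>v\<in>V. p v = measure M (A v)"
    unfolding classical_behaviors_def by blast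
  interpret prob_space M by (rule M)
  define \<alpha> where "\<alpha> = independence_number X ?C"
  have bound: "card S \<le> \<alpha>" if "independent_set X ?C S" for S
  proof -
    have "finite {S. independent_set X ?C S}"
      using finX by (rule finite_subset[rotated, OF finite_Pow_iff[THEN iffD2]]) (auto simp: independent_set_def)
    then show ?thesis unfolding \<alpha>_def independence_number_def using that by auto
  qed
  have pt: "(\<Sum>x\<in>X. indicator (A (f x)) \<omega>) \<le> (real \<alpha>)" for \<omega>
  proof -
    define S where "S = {x\<in>X. \<omega> \<in> A (f x)}"
    have "(\<Sum>x\<in>X. indicator (A (f x)) \<omega> :: real) = (\<Sum>x\<in>X. if x \<in> S then 1 else 0)"
      by (intro sum.cong) (auto simp: S_def indicator_def)
    also have "\<dots> = real (card S)" using finX by (simp add: sum.If_cases S_def Int_def)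
    also have "card S \<le> \<alpha>"
    proof (rule bound)
      show "independent_set X ?C S"
        unfolding independent_set_def S_def
      proof (intro conjI ballI)
        fix u w assume u: "u \<in> {x\<in>X. \<omega> \<in> A (f x)}" and w: "w \<in> {x\<in>X. \<omega> \<in> A (f x)}"
        show "\<not> ?C u w"
        proof
          assume "?C u w"
          then have "E (f u) (f w)" using fE u w by auto
          then show False using Adisj fX u w by blast
        qed
      qed auto
    qed
    finally show ?thesis by simp
  qed
  have meas: "x \<in> X \<Longrightarrow> measure M (A (f x)) = 1 / real d" for x
    using pA fX by (metis p_def)
  have "real (card X) / real d = (\<Sum>x\<in>X. measure M (A (f x)))"
    using meas by simp
  also have "\<dots> = (\<Sum>x\<in>X. integral\<^sup>L M (indicator (A (f x))))"
    using AM fX by (intro sum.cong) auto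
  also have "\<dots> = integral\<^sup>L M (\<lambda>\<omega>. \<Sum>x\<in>X. indicator (A (f x)) \<omega>)"
    by (rule Bochner_Integration.integral_sum[where I=X and f="\<lambda>x \<omega>. indicator (A (f x)) \<omega> :: real", symmetric]) (use AM fX in \<open>auto intro!: integrable_indicator simp: less_top[symmetric]\<close>)
  also have "\<dots> \<le> integral\<^sup>L M (\<lambda>\<omega>. real \<alpha>)"
    by (rule integral_mono) (use AM fX pt in \<open>auto intro!: integrable_indicator simp: less_top[symmetric]\<close>)
  also have "\<dots> = real \<alpha>" by (simp add: prob_space)
  finally have "real (card X) / real d \<le> real \<alpha>" .
  then have "real (card X) \<le> real \<alpha> * real d" using dpos by (simp add: field_simps)
  then show ?thesis unfolding \<alpha>_def by (simp flip: of_nat_mult)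
qed

end
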